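(* Let $a_1,\ldots,a_k$ be positive integers, $A=\sum_{j=1}^k a_j$, $n=k+2$, and $v=[4A+2;\,8a_1,\ldots,8a_k,\,1,\,1]$ (players $1,\ldots,n$). Let $v_{\&\{n-1,n\}}$ be the game in which player $n$ annexes player $n-1$, i.e. they are replaced by one player $\&\{n-1,n\}$ of weight $2$. Then $\beta_{\&\{n-1,n\}}(v_{\&\{n-1,n\}})>\beta_n(v)$ if and only if there is a set $P\subseteq\{1,\ldots,k\}$ with $\sum_{j\in P}a_j=\sum_{j\notin P}a_j$.
   Context: A weighted voting game $[q;w_1,\ldots,w_n]$ has players $1,\ldots,n$ with nonnegative weights $w_j$ and quota $q$, $0<q\le\sum_jw_j$; a coalition $S$ is winning iff $\sum_{j\in S}w_j\ge q$. Player $j$ is critical in $S$ if $S$ is winning and $S\setminus\{j\}$ is losing; $\eta_j$ is the number of coalitions in which $j$ is critical, and the Banzhaf index is $\beta_j=\eta_j/\sum_k\eta_k$. Merging a set $T$ of players yields the WVG with the same quota in which the players of $T$ are replaced by a single player $\&T$ of weight $\sum_{j\in T}w_j$. *)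

theory Defs
  imports Complex_Main
begin

definition winning :: "('p \<Rightarrow> real) \<Rightarrow> real \<Rightarrow> 'p set \<Rightarrow> bool" where
  "winning w q S \<longleftrightarrow> q \<le> (\<Sum>j\<in>S. w j)"

definition critical :: "('p \<Rightarrow> real) \<Rightarrow> real \<Rightarrow> 'p set \<Rightarrow> 'p \<Rightarrow> bool" where
  "critical w q S j \<longleftrightarrow> j \<in> S \<and> winning w q S \<and> \<not> winning w q (S - {j})"

definition eta :: "'p set \<Rightarrow> ('p \<Rightarrow> real) \<Rightarrow> real \<Rightarrow> 'p \<Rightarrow> nat" where
  "eta N w q j = card {S. S \<subseteq> N \<and> critical w q S j}"

definition banzhaf :: "'p set \<Rightarrow> ('p \<Rightarrow> real) \<Rightarrow> real \<Rightarrow> 'p \<Rightarrow> real" where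
  "banzhaf N w q j = real (eta N w q j) / real (\<Sum>k\<in>N. eta N w q k)"

text \<open>Merging the set T of players: they are replaced by a single player, labelled m
  (an element of T used as the name of the new player &T), of weight \<Sum>T.
  The quota stays the same.\<close>
definition merge_players :: "'p set \<Rightarrow> 'p set \<Rightarrow> 'p \<Rightarrow> 'p set" where
  "merge_players N T m = (N - T) \<union> {m}"

definition merge_weights :: "('p \<Rightarrow> real) \<Rightarrow> 'p set \<Rightarrow> 'p \<Rightarrow> ('p \<Rightarrow> real)" where
  "merge_weights w T m = w(m := (\<Sum>j\<in>T. w j))"

end

theory Submission imports Defs begin

context
  fixes a :: "nat \<Rightarrow> nat" and k :: nat and w :: "nat \<Rightarrow> real" and A :: nat
  assumes wdef: "w = (\<lambda>j. if j \<in> {1..k} then 8*real(a j) else if j = k+1 \<or> j = k+2 then 1 else 0)"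
  and Adef: "A = sum a {1..k}"
begin

lemma sum_gen:
  fixes f :: "nat \<Rightarrow> real"
  assumes T: "T \<subseteq> {1..k+2}" and f: "\<forall>j\<in>{1..k}. f j = 8 * real (a j)"
  shows "sum f T = real (8 * sum a (T \<inter> {1..k})) + (if k+1 \<in> T then f (k+1) else 0) + (if k+2 \<in> T then f (k+2) else 0)"
proof -
  have fin: "finite T" using T finite_subset by blast
  have eq: "T = (T \<inter> {1..k}) \<union> (T \<inter> {k+1,k+2})" using T by auto
  have "sum f T = sum f ((T \<inter> {1..k}) \<union> (T \<inter> {k+1,k+2}))"
    by (rule arg_cong[where f="sum f"], rule eq)
  also have "\<dots> = sum f (T \<inter> {1..k}) + sum f (T \<inter> {k+1,k+2})"
    by (rule sum.union_disjoint) (use fin in auto)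
  also have "sum f (T \<inter> {1..k}) = sum (\<lambda>j. 8 * real (a j)) (T \<inter> {1..k})"
    by (rule sum.cong) (use f in auto)
  also have "\<dots> = real (8 * sum a (T \<inter> {1..k}))" by (simp add: sum_distrib_left)
  also have "sum f (T \<inter> {k+1,k+2}) = (if k+1 \<in> T then f (k+1) else 0) + (if k+2 \<in> T then f (k+2) else 0)"
    by (cases "k+1 \<in> T"; cases "k+2 \<in> T") (auto simp: Int_insert_right)
  finally show ?thesis by simp
qed

definition cc :: "nat set \<Rightarrow> nat" where
  "cc T = (if k+1 \<in> T then 1 else 0) + (if k+2 \<in> T then 1 else 0)"
definition cc' :: "nat set \<Rightarrow> nat" where
  "cc' T = (if k+1 \<in> T then 1 else 0) + (if k+2 \<in> T then 2 else 0)"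

lemma win_w:
  assumes T: "T \<subseteq> {1..k+2}"
  shows "winning w (4 * real A + 2) T \<longleftrightarrow> 4*A+2 \<le> 8 * sum a (T \<inter> {1..k}) + cc T"
proof -
  have "sum w T = real (8 * sum a (T \<inter> {1..k}) + cc T)"
    using sum_gen[OF T, of w] by (simp add: wdef cc_def)
  moreover have e: "4 * real A + 2 = real (4*A+2)" by simp
  ultimately show ?thesis unfolding winning_def by (simp only: of_nat_le_iff)
qed

lemma win_w':
  assumes T: "T \<subseteq> {1..k+2}"
  shows "winning (w(k+2 := 2)) (4 * real A + 2) T \<longleftrightarrow> 4*A+2 \<le> 8 * sum a (T \<inter> {1..k}) + cc' T"
proof -
  have "sum (w(k+2 := 2)) T = real (8 * sum a (T \<inter> {1..k}) + cc' T)"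
    using sum_gen[OF T, of "w(k+2 := 2)"] by (simp add: wdef cc'_def)
  moreover have e: "4 * real A + 2 = real (4*A+2)" by simp
  ultimately show ?thesis unfolding winning_def by (simp only: of_nat_le_iff)
qed

lemma Int_minus: "x \<notin> {1..k} \<Longrightarrow> (T - {x}) \<inter> {1..k} = T \<inter> {1..k}"
  by auto

lemma crit_orig:
  "{T. T \<subseteq> {1..k+2} \<and> critical w (4 * real A + 2) T (k+2)}
   = (\<lambda>S. S \<union> {k+1,k+2}) ` {S. S \<subseteq> {1..k} \<and> 2 * sum a S = A}"
proof (intro equalityI subsetI)
  fix T assume "T \<in> {T. T \<subseteq> {1..k+2} \<and> critical w (4 * real A + 2) T (k+2)}"
  then have T: "T \<subseteq> {1..k+2}" and c: "critical w (4 * real A + 2) T (k+2)" by auto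
  have T2: "T - {k+2} \<subseteq> {1..k+2}" using T by auto
  have im: "(T - {k+2}) \<inter> {1..k} = T \<inter> {1..k}" by auto
  from c have in2: "k+2 \<in> T" and w1: "4*A+2 \<le> 8 * sum a (T \<inter> {1..k}) + cc T"
    and w2: "\<not> 4*A+2 \<le> 8 * sum a (T \<inter> {1..k}) + cc (T - {k+2})"
    unfolding critical_def win_w[OF T] win_w[OF T2] im by auto
  have "k+1 \<in> T \<and> 2 * sum a (T \<inter> {1..k}) = A"
    using w1 w2 in2 unfolding cc_def by (cases "k+1 \<in> T") (simp_all, presburger+)
  moreover have "T = (T \<inter> {1..k}) \<union> {k+1,k+2}" using T in2 calculation by auto
  ultimately show "T \<in> (\<lambda>S. S \<union> {k+1,k+2}) ` {S. S \<subseteq> {1..k} \<and> 2 * sum a S = A}"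
    by (intro rev_image_eqI[of "T \<inter> {1..k}"]) auto
next
  fix T assume "T \<in> (\<lambda>S. S \<union> {k+1,k+2}) ` {S. S \<subseteq> {1..k} \<and> 2 * sum a S = A}"
  then obtain S where S: "S \<subseteq> {1..k}" "2 * sum a S = A" and TS: "T = S \<union> {k+1,k+2}" by auto
  have T: "T \<subseteq> {1..k+2}" using S TS by auto
  have T2: "T - {k+2} \<subseteq> {1..k+2}" using T by auto
  have i: "T \<inter> {1..k} = S" using S TS by auto
  have im: "(T - {k+2}) \<inter> {1..k} = T \<inter> {1..k}" by auto
  show "T \<in> {T. T \<subseteq> {1..k+2} \<and> critical w (4 * real A + 2) T (k+2)}"
    unfolding mem_Collect_eq critical_def win_w[OF T] win_w[OF T2] im i
    using T S TS by (auto simp: cc_def)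
qed

lemma crit_merged:
  "{T. T \<subseteq> insert (k+2) {1..k} \<and> critical (w(k+2 := 2)) (4 * real A + 2) T (k+2)}
   = (\<lambda>S. insert (k+2) S) ` {S. S \<subseteq> {1..k} \<and> 2 * sum a S = A}"
proof (intro equalityI subsetI)
  fix T assume "T \<in> {T. T \<subseteq> insert (k+2) {1..k} \<and> critical (w(k+2 := 2)) (4 * real A + 2) T (k+2)}"
  then have T0: "T \<subseteq> insert (k+2) {1..k}" and c: "critical (w(k+2 := 2)) (4 * real A + 2) T (k+2)" by auto
  have T: "T \<subseteq> {1..k+2}" using T0 by auto
  have T2: "T - {k+2} \<subseteq> {1..k+2}" using T by auto
  have n1: "k+1 \<notin> T" using T0 by auto
  have im: "(T - {k+2}) \<inter> {1..k} = T \<inter> {1..k}" by auto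
  from c have in2: "k+2 \<in> T" and w1: "4*A+2 \<le> 8 * sum a (T \<inter> {1..k}) + cc' T"
    and w2: "\<not> 4*A+2 \<le> 8 * sum a (T \<inter> {1..k}) + cc' (T - {k+2})"
    unfolding critical_def win_w'[OF T] win_w'[OF T2] im by auto
  have "2 * sum a (T \<inter> {1..k}) = A"
    using w1 w2 in2 n1 unfolding cc'_def by simp
  moreover have "T = insert (k+2) (T \<inter> {1..k})" using T0 in2 by auto
  ultimately show "T \<in> (\<lambda>S. insert (k+2) S) ` {S. S \<subseteq> {1..k} \<and> 2 * sum a S = A}"
    by (intro rev_image_eqI[of "T \<inter> {1..k}"]) auto
next
  fix T assume "T \<in> (\<lambda>S. insert (k+2) S) ` {S. S \<subseteq> {1..k} \<and> 2 * sum a S = A}"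
  then obtain S where S: "S \<subseteq> {1..k}" "2 * sum a S = A" and TS: "T = insert (k+2) S" by auto
  have T: "T \<subseteq> {1..k+2}" using S TS by auto
  have T2: "T - {k+2} \<subseteq> {1..k+2}" using T by auto
  have i: "T \<inter> {1..k} = S" using S TS by auto
  have im: "(T - {k+2}) \<inter> {1..k} = T \<inter> {1..k}" by auto
  have n1: "k+1 \<notin> T" using S TS by auto
  show "T \<in> {T. T \<subseteq> insert (k+2) {1..k} \<and> critical (w(k+2 := 2)) (4 * real A + 2) T (k+2)}"
    unfolding mem_Collect_eq critical_def win_w'[OF T] win_w'[OF T2] im i
    using T S TS n1 by (auto simp: cc'_def)
qed

lemma crit_k1:
  assumes S: "S \<subseteq> {1..k}" "2 * sum a S = A"
  shows "S \<union> {k+1,k+2} \<in> {T. T \<subseteq> {1..k+2} \<and> critical w (4 * real A + 2) T (k+1)}"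
proof -
  define T where "T = S \<union> {k+1,k+2}"
  have T: "T \<subseteq> {1..k+2}" using S T_def by auto
  have T2: "T - {k+1} \<subseteq> {1..k+2}" using T by auto
  have i: "T \<inter> {1..k} = S" using S T_def by auto
  have im: "(T - {k+1}) \<inter> {1..k} = T \<inter> {1..k}" by auto
  have "T \<in> {T. T \<subseteq> {1..k+2} \<and> critical w (4 * real A + 2) T (k+1)}"
    unfolding mem_Collect_eq critical_def win_w[OF T] win_w[OF T2] im i
    using T S T_def by (auto simp: cc_def)
  then show ?thesis using T_def by simp
qed

lemma crit_big:
  assumes j: "j \<in> {1..k}"
  shows "card {T. T \<subseteq> insert (k+2) {1..k} \<and> critical (w(k+2 := 2)) (4 * real A + 2) T j}
    \<le> card {T. T \<subseteq> {1..k+2} \<and> critical w (4 * real A + 2) T j}"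
proof (rule card_inj_on_le)
  define f where "f T = (if k+2 \<in> T then insert (k+1) T else T)" for T :: "nat set"
  have key: "cc (f X) = cc' X \<and> f X \<inter> {1..k} = X \<inter> {1..k} \<and> f X \<subseteq> {1..k+2}"
    if "X \<subseteq> insert (k+2) {1..k}" for X
    using that by (auto simp: f_def cc_def cc'_def)
  show "inj_on f {T. T \<subseteq> insert (k+2) {1..k} \<and> critical (w(k+2 := 2)) (4 * real A + 2) T j}"
  proof (rule inj_onI)
    fix X Y assume X: "X \<in> {T. T \<subseteq> insert (k+2) {1..k} \<and> critical (w(k+2 := 2)) (4 * real A + 2) T j}"
      and Y: "Y \<in> {T. T \<subseteq> insert (k+2) {1..k} \<and> critical (w(k+2 := 2)) (4 * real A + 2) T j}"
      and e: "f X = f Y"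
    have "X = f X - {k+1}" "Y = f Y - {k+1}" using X Y by (auto simp: f_def)
    then show "X = Y" using e by simp
  qed
  show "f ` {T. T \<subseteq> insert (k+2) {1..k} \<and> critical (w(k+2 := 2)) (4 * real A + 2) T j}
    \<subseteq> {T. T \<subseteq> {1..k+2} \<and> critical w (4 * real A + 2) T j}"
  proof
    fix U assume "U \<in> f ` {T. T \<subseteq> insert (k+2) {1..k} \<and> critical (w(k+2 := 2)) (4 * real A + 2) T j}"
    then obtain T where T0: "T \<subseteq> insert (k+2) {1..k}" and c: "critical (w(k+2 := 2)) (4 * real A + 2) T j"
      and U: "U = f T" by auto
    have T: "T \<subseteq> {1..k+2}" using T0 by auto
    have T2: "T - {j} \<subseteq> {1..k+2}" using T by auto
    have T02: "T - {j} \<subseteq> insert (k+2) {1..k}" using T0 by auto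
    have fm: "f (T - {j}) = f T - {j}" using j by (auto simp: f_def)
    have k1: "cc (f T) = cc' T" "f T \<inter> {1..k} = T \<inter> {1..k}" "f T \<subseteq> {1..k+2}"
      using key[OF T0] by auto
    have k2: "cc (f T - {j}) = cc' (T - {j})" "(f T - {j}) \<inter> {1..k} = (T - {j}) \<inter> {1..k}" "f T - {j} \<subseteq> {1..k+2}"
      using key[OF T02] fm by auto
    have jT: "j \<in> f T" using c by (auto simp: critical_def f_def)
    show "U \<in> {T. T \<subseteq> {1..k+2} \<and> critical w (4 * real A + 2) T j}"
      using c unfolding U mem_Collect_eq critical_def win_w[OF k1(3)] win_w[OF k2(3)]
        win_w'[OF T] win_w'[OF T2] k1 k2 using jT k1(3) by auto
  qed
  show "finite {T. T \<subseteq> {1..k+2} \<and> critical w (4 * real A + 2) T j}"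
    by (rule finite_subset[of _ "Pow {1..k+2}"]) auto
qed

end

theorem mainTheorem9:
  fixes a :: "nat \<Rightarrow> nat" and k :: nat
  assumes apos: "\<And>j. j \<in> {1..k} \<Longrightarrow> a j > 0"
  defines "A \<equiv> (\<Sum>j=1..k. a j)"
  defines "n \<equiv> k + 2"
  defines "w \<equiv> (\<lambda>j::nat. if j \<in> {1..k} then 8 * real (a j) else if j = k + 1 \<or> j = k + 2 then 1 else 0)"
  defines "q \<equiv> 4 * real A + 2"
  shows "banzhaf (merge_players {1..n} {n - 1, n} n) (merge_weights w {n - 1, n} n) q n
           > banzhaf {1..n} w q n
         \<longleftrightarrow> (\<exists>P \<subseteq> {1..k}. (\<Sum>j\<in>P. a j) = (\<Sum>j\<in>{1..k} - P. a j))"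
proof -
  have wd: "w = (\<lambda>j. if j \<in> {1..k} then 8*real(a j) else if j = k+1 \<or> j = k+2 then 1 else 0)"
    using w_def by simp
  have Ad: "A = sum a {1..k}" using A_def by simp
  have N': "merge_players {1..n} {n - 1, n} n = insert (k+2) {1..k}"
    by (auto simp: merge_players_def n_def)
  have W': "merge_weights w {n - 1, n} n = w(k+2 := 2)"
    unfolding merge_weights_def n_def by (simp add: wd)
  have N: "{1..n} = insert (k+2) (insert (k+1) {1..k})" by (auto simp: n_def)
  have nn: "n = k+2" by (simp add: n_def)
  define G where "G = {S. S \<subseteq> {1..k} \<and> 2 * sum a S = A}"
  have finG: "finite G" unfolding G_def by (rule finite_subset[of _ "Pow {1..k}"]) auto
  define N0 where "N0 = insert (k+2) (insert (k+1) {1..k})"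
  define N1 where "N1 = insert (k+2) {1..k}"
  define w' where "w' = w(k+2 := 2)"
  have E1: "eta N0 w q (k+2) = card G"
  proof -
    have "{S. S \<subseteq> N0 \<and> critical w q S (k+2)} = (\<lambda>S. S \<union> {k+1,k+2}) ` G"
      using crit_orig[OF wd Ad] unfolding G_def q_def N0_def N[symmetric] nn by simp
    moreover have "inj_on (\<lambda>S. S \<union> {k+1,k+2}) G"
    proof (rule inj_onI)
      fix X Y assume "X \<in> G" "Y \<in> G" "X \<union> {k+1,k+2} = Y \<union> {k+1,k+2}"
      moreover have "X = (X \<union> {k+1,k+2}) \<inter> {1..k}" "Y = (Y \<union> {k+1,k+2}) \<inter> {1..k}"
        using calculation(1,2) unfolding G_def by auto
      ultimately show "X = Y" by simp
    qed
    ultimately show ?thesis unfolding eta_def by (simp add: card_image)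
  qed
  have E2: "eta N1 w' q (k+2) = card G"
  proof -
    have "{S. S \<subseteq> N1 \<and> critical w' q S (k+2)} = (\<lambda>S. insert (k+2) S) ` G"
      using crit_merged[OF wd Ad] unfolding G_def q_def N1_def w'_def by simp
    moreover have "inj_on (\<lambda>S. insert (k+2) S) G"
    proof (rule inj_onI)
      fix X Y assume "X \<in> G" "Y \<in> G" "insert (k+2) X = insert (k+2) Y"
      moreover have "X = (insert (k+2) X) \<inter> {1..k}" "Y = (insert (k+2) Y) \<inter> {1..k}"
        using calculation(1,2) unfolding G_def by auto
      ultimately show "X = Y" by simp
    qed
    ultimately show ?thesis unfolding eta_def by (simp add: card_image)
  qed
  have big: "sum (eta N1 w' q) {1..k} \<le> sum (eta N0 w q) {1..k}"
  proof (rule sum_mono)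
    fix j assume "j \<in> {1..k}"
    from crit_big[OF wd Ad this] show "eta N1 w' q j \<le> eta N0 w q j"
      unfolding eta_def N1_def N0_def w'_def q_def N[symmetric] nn .
  qed
  have s0: "sum (eta N0 w q) N0 = sum (eta N0 w q) {1..k} + eta N0 w q (k+1) + eta N0 w q (k+2)"
    unfolding N0_def by simp
  have s1: "sum (eta N1 w' q) N1 = sum (eta N1 w' q) {1..k} + eta N1 w' q (k+2)"
    unfolding N1_def by simp
  have rhs: "(\<exists>P \<subseteq> {1..k}. (\<Sum>j\<in>P. a j) = (\<Sum>j\<in>{1..k} - P. a j)) \<longleftrightarrow> G \<noteq> {}"
  proof -
    have "(\<Sum>j\<in>P. a j) = (\<Sum>j\<in>{1..k} - P. a j) \<longleftrightarrow> 2 * sum a P = A" if "P \<subseteq> {1..k}" for P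
    proof -
      have "A = sum a ({1..k} - P) + sum a P" unfolding Ad by (rule sum.subset_diff[OF that]) simp
      then show ?thesis by linarith
    qed
    then show ?thesis unfolding G_def by blast
  qed
  have goal: "banzhaf N1 w' q (k+2) > banzhaf N0 w q (k+2) \<longleftrightarrow> G \<noteq> {}"
  proof (cases "G = {}")
    case True
    then show ?thesis unfolding banzhaf_def E1 E2 by simp
  next
    case False
    then obtain S where S: "S \<in> G" by auto
    have "S \<union> {k+1,k+2} \<in> {T. T \<subseteq> N0 \<and> critical w q T (k+1)}"
      using crit_k1[OF wd Ad, of S] S unfolding G_def q_def N0_def N[symmetric] nn by simp
    moreover have "finite {T. T \<subseteq> N0 \<and> critical w q T (k+1)}"
      by (rule finite_subset[of _ "Pow N0"]) (auto simp: N0_def)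
    ultimately have e1: "eta N0 w q (k+1) > 0" unfolding eta_def
      by (metis card_gt_0_iff empty_iff)
    have Gp: "card G > 0" using False finG by (simp add: card_gt_0_iff)
    have "real (card G) / real (sum (eta N0 w q) N0) < real (card G) / real (sum (eta N1 w' q) N1)"
    proof (rule divide_strict_left_mono)
      have "sum (eta N1 w' q) N1 < sum (eta N0 w q) N0"
        unfolding s0 s1 E1 E2 using big e1 by simp
      then show "real (sum (eta N1 w' q) N1) < real (sum (eta N0 w q) N0)"
        by (simp only: of_nat_less_iff)
      show "0 < real (card G)" using Gp by simp
      have "0 < sum (eta N0 w q) N0" "0 < sum (eta N1 w' q) N1"
        unfolding s0 s1 E1 E2 using Gp by simp_all
      then show "0 < real (sum (eta N0 w q) N0) * real (sum (eta N1 w' q) N1)"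
        by (simp only: of_nat_mult[symmetric] of_nat_0_less_iff nat_0_less_mult_iff)
    qed
    then show ?thesis using False unfolding banzhaf_def E1 E2 by simp
  qed
  have X: "banzhaf (merge_players {1..n} {n - 1, n} n) (merge_weights w {n - 1, n} n) q n
     = banzhaf N1 w' q (k+2)" by (subst N', subst W') (simp add: N1_def w'_def nn)
  have Y: "banzhaf {1..n} w q n = banzhaf N0 w q (k+2)" by (subst N) (simp add: N0_def nn)
  show ?thesis unfolding X Y rhs using goal .
qed

end
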